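(* Let $1\le N_a<N_b$, $\mathcal N=N_a+N_b$, real $\kappa_1<\dots<\kappa_{\mathcal N}$ with indices taken modulo $\mathcal N$. For $q=(q_1,q_2)\in\mathbb R^2$ define $q_{mn}=q_2-(\kappa_m+\kappa_n)q_1+\kappa_m\kappa_n$, $\widetilde q_{mn}=(\kappa_m-\kappa_n)q_{mn}$, and $\rho_k(q)=\theta(\widetilde q_{k,k-N_a})\,\theta(\widetilde q_{k+N_a,k})$, where $\theta$ is the Heaviside step function. Fix $m$. Then the region of the $q$-plane with characteristic function $$P_m(q)=\prod_{k=m+N_a}^{m+N_b}\rho_k(q)$$ is a polygon contained in the parabolic region $q_2\ge q_1^2$ and having a vertex at the point $Q_m=(\kappa_m,\kappa_m^2)$. More precisely, this polygon is contained in the polygon with vertices $Q_m,Q_{m+1},\dots,Q_{m+N_b}$ (where $Q_l=(\kappa_l,\kappa_l^2)$), coincides with that polygon when $N_a=1$, and lies in the strip $\min_{m\le l\le m+N_b}\kappa_l\le q_1\le\max_{m\le l\le m+N_b}\kappa_l$.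
   Context: Indices of $\kappa$ are read modulo $\mathcal N$, i.e. $\kappa_{l+\mathcal N}=\kappa_l$ for all $l\in\mathbb Z$. *)

theory Defs
  imports "HOL-Analysis.Analysis"
begin

text \<open>Heaviside step function, with the convention theta(0) = 1 (closed regions).\<close>
definition heaviside :: "real \<Rightarrow> real" where
  "heaviside x = (if x \<ge> 0 then 1 else 0)"

definition qmn :: "(int \<Rightarrow> real) \<Rightarrow> real \<times> real \<Rightarrow> int \<Rightarrow> int \<Rightarrow> real" where
  "qmn \<kappa> q m n = snd q - (\<kappa> m + \<kappa> n) * fst q + \<kappa> m * \<kappa> n"

definition qtilde :: "(int \<Rightarrow> real) \<Rightarrow> real \<times> real \<Rightarrow> int \<Rightarrow> int \<Rightarrow> real" where
  "qtilde \<kappa> q m n = (\<kappa> m - \<kappa> n) * qmn \<kappa> q m n"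

definition rho :: "(int \<Rightarrow> real) \<Rightarrow> nat \<Rightarrow> real \<times> real \<Rightarrow> int \<Rightarrow> real" where
  "rho \<kappa> Na q k = heaviside (qtilde \<kappa> q k (k - int Na)) * heaviside (qtilde \<kappa> q (k + int Na) k)"

definition Pm :: "(int \<Rightarrow> real) \<Rightarrow> nat \<Rightarrow> nat \<Rightarrow> int \<Rightarrow> real \<times> real \<Rightarrow> real" where
  "Pm \<kappa> Na Nb m q = (\<Prod>k\<in>{m + int Na .. m + int Nb}. rho \<kappa> Na q k)"

definition region :: "(int \<Rightarrow> real) \<Rightarrow> nat \<Rightarrow> nat \<Rightarrow> int \<Rightarrow> (real \<times> real) set" where
  "region \<kappa> Na Nb m = {q. Pm \<kappa> Na Nb m q = 1}"

definition Qpt :: "(int \<Rightarrow> real) \<Rightarrow> int \<Rightarrow> real \<times> real" where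
  "Qpt \<kappa> l = (\<kappa> l, (\<kappa> l)^2)"

end

theory Submission
  imports Defs
begin

definition orient :: "real \<times> real \<Rightarrow> real \<times> real \<Rightarrow> real \<times> real \<Rightarrow> real" where
  "orient A B C = (fst B - fst A) * (snd C - snd A) - (snd B - snd A) * (fst C - fst A)"

lemma orient_cyc: "orient A B C = orient B C A"
  by (simp add: orient_def algebra_simps)

lemma orient_swap: "orient A B C = - orient B A C"
  by (simp add: orient_def algebra_simps)

lemma orient_same: "orient A B A = 0" "orient A B B = 0" "orient A A B = 0"
  by (simp_all add: orient_def algebra_simps)

lemma orient_ident:
  "orient X Y q * orient A B C = orient B C q * orient X Y A + orient C A q * orient X Y B + orient A B q * orient X Y C"
  by (simp add: orient_def algebra_simps)

lemma orient_sum: "orient B C q + orient C A q + orient A B q = orient A B C"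
  by (simp add: orient_def algebra_simps)

lemma triangle_hull:
  assumes T: "orient A B C > 0" and "orient B C q \<ge> 0" "orient C A q \<ge> 0" "orient A B q \<ge> 0"
  shows "q \<in> convex hull {A, B, C}"
proof -
  define t where "t = orient A B C"
  define u where "u = orient B C q / t"
  define v where "v = orient C A q / t"
  define w where "w = orient A B q / t"
  have tpos: "t > 0" using T t_def by simp
  have "u + v + w = 1" using orient_sum[of B C q A] tpos
    by (simp add: u_def v_def w_def t_def add_divide_distrib[symmetric])
  moreover have "0 \<le> u" "0 \<le> v" "0 \<le> w" using assms tpos by (simp_all add: u_def v_def w_def)
  moreover have "q = u *\<^sub>R A + v *\<^sub>R B + w *\<^sub>R C"
  proof -
    have e1: "t * fst q = orient B C q * fst A + orient C A q * fst B + orient A B q * fst C"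
      by (simp add: t_def orient_def algebra_simps)
    have e2: "t * snd q = orient B C q * snd A + orient C A q * snd B + orient A B q * snd C"
      by (simp add: t_def orient_def algebra_simps)
    have "fst q = u * fst A + v * fst B + w * fst C"
      using e1 tpos by (simp add: u_def v_def w_def field_simps)
    moreover have "snd q = u * snd A + v * snd B + w * snd C"
      using e2 tpos by (simp add: u_def v_def w_def field_simps)
    ultimately show ?thesis by (simp add: prod_eq_iff)
  qed
  ultimately show ?thesis unfolding convex_hull_3 by blast
qed

lemma polygon_hull:
  fixes P :: "nat \<Rightarrow> real \<times> real" and a n :: nat
  assumes cv: "\<And>i j k. i < j \<Longrightarrow> j < k \<Longrightarrow> k \<le> n \<Longrightarrow> orient (P i) (P j) (P k) > 0"
    and a1: "1 \<le> a" and an: "a < n"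
    and cons: "\<And>b. b + a \<le> n \<Longrightarrow> orient (P b) (P (b + a)) q \<ge> 0"
    and cl: "orient (P n) (P 0) q \<ge> 0"
  shows "q \<in> convex hull (P ` {0..n})"
  using cv an cons cl
proof (induction n)
  case 0 then show ?case by simp
next
  case (Suc n)
  have npos: "0 < n" using a1 Suc.prems(2) by simp
  show ?case
  proof (cases "orient (P 0) (P n) q \<ge> 0")
    case True
    define d where "d = Suc n - a"
    have d1: "1 \<le> d" "d \<le> n" "d + a = Suc n" using a1 Suc.prems(2) by (auto simp: d_def)
    have g: "orient (P d) (P (Suc n)) q \<ge> 0" using Suc.prems(3)[of d] d1 by simp
    have b: "orient (P (Suc n)) (P 0) q \<ge> 0" using Suc.prems(4) .
    have Tp: "orient (P 0) (P n) (P (Suc n)) > 0" using Suc.prems(1)[of 0 n "Suc n"] npos by simp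
    have c1: "orient (P d) (P (Suc n)) (P 0) > 0"
      using Suc.prems(1)[of 0 d "Suc n"] d1 orient_cyc[of "P d" "P (Suc n)" "P 0"]
        orient_cyc[of "P (Suc n)" "P 0" "P d"] by simp
    have c2: "orient (P d) (P (Suc n)) (P n) \<le> 0"
    proof (cases "d = n")
      case True then show ?thesis by (simp add: orient_same)
    next
      case False
      then have "orient (P d) (P n) (P (Suc n)) > 0" using Suc.prems(1)[of d n "Suc n"] d1 by simp
      then show ?thesis using orient_swap[of "P d" "P (Suc n)" "P n"]
          orient_cyc[of "P (Suc n)" "P d" "P n"] orient_cyc[of "P d" "P n" "P (Suc n)"] by simp
    qed
    have id: "orient (P d) (P (Suc n)) q * orient (P 0) (P n) (P (Suc n))
       = orient (P n) (P (Suc n)) q * orient (P d) (P (Suc n)) (P 0)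
       + orient (P (Suc n)) (P 0) q * orient (P d) (P (Suc n)) (P n)"
      using orient_ident[of "P d" "P (Suc n)" q "P 0" "P n" "P (Suc n)"] by (simp add: orient_same)
    have "orient (P n) (P (Suc n)) q * orient (P d) (P (Suc n)) (P 0) \<ge> 0"
    proof -
      have "orient (P (Suc n)) (P 0) q * orient (P d) (P (Suc n)) (P n) \<le> 0"
        using b c2 by (simp add: mult_nonneg_nonpos)
      moreover have "orient (P d) (P (Suc n)) q * orient (P 0) (P n) (P (Suc n)) \<ge> 0"
        using g Tp by simp
      ultimately show ?thesis using id by linarith
    qed
    then have bc: "orient (P n) (P (Suc n)) q \<ge> 0" using c1 by (auto simp: zero_le_mult_iff)
    have "q \<in> convex hull {P 0, P n, P (Suc n)}"
      by (rule triangle_hull[OF Tp bc b True])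
    moreover have "convex hull {P 0, P n, P (Suc n)} \<subseteq> convex hull (P ` {0..Suc n})"
      by (rule hull_mono) auto
    ultimately show ?thesis by blast
  next
    case False
    have an': "a < n"
    proof (rule ccontr)
      assume "\<not> a < n"
      then have "a = n" using Suc.prems(2) by simp
      then show False using Suc.prems(3)[of 0] False by simp
    qed
    have "q \<in> convex hull (P ` {0..n})"
    proof (rule Suc.IH)
      show "\<And>i j k. i < j \<Longrightarrow> j < k \<Longrightarrow> k \<le> n \<Longrightarrow> orient (P i) (P j) (P k) > 0"
        using Suc.prems(1) by simp
      show "a < n" by fact
      show "\<And>b. b + a \<le> n \<Longrightarrow> orient (P b) (P (b + a)) q \<ge> 0" using Suc.prems(3) by simp
      show "orient (P n) (P 0) q \<ge> 0" using False orient_swap[of "P n" "P 0" q] by simp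
    qed
    moreover have "convex hull (P ` {0..n}) \<subseteq> convex hull (P ` {0..Suc n})"
      by (rule hull_mono) auto
    ultimately show ?thesis by blast
  qed
qed


lemma periodic_int:
  fixes f :: "int \<Rightarrow> 'a"
  assumes "\<And>l. f (l + p) = f l"
  shows "f (l + k * p) = f l"
proof (induct k rule: int_induct[where k=0])
  case base then show ?case by simp
next
  case (step1 i)
  have "f (l + (i + 1) * p) = f ((l + i * p) + p)" by (simp add: algebra_simps)
  then show ?case using assms step1 by simp
next
  case (step2 i)
  have "f (l + i * p) = f ((l + (i - 1) * p) + p)" by (simp add: algebra_simps)
  then show ?case using assms step2 by simp
qed

lemma orient_Qpt: "orient (Qpt \<kappa> i) (Qpt \<kappa> j) (Qpt \<kappa> l) = (\<kappa> j - \<kappa> i) * (\<kappa> l - \<kappa> i) * (\<kappa> l - \<kappa> j)"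
  by (simp add: orient_def Qpt_def power2_eq_square algebra_simps)

lemma qtilde_orient: "qtilde \<kappa> q a b = orient (Qpt \<kappa> b) (Qpt \<kappa> a) q"
  by (simp add: qtilde_def qmn_def orient_def Qpt_def power2_eq_square algebra_simps)

lemma kappa_pos0:
  fixes \<kappa> :: "int \<Rightarrow> real"
  assumes per: "\<And>l. \<kappa> (l + int N) = \<kappa> l" and sm: "strict_mono_on {1..int N} \<kappa>"
    and i0: "1 \<le> i" "i \<le> int N" and "i < j" "j < l" "l < i + int N"
  shows "(\<kappa> j - \<kappa> i) * (\<kappa> l - \<kappa> i) * (\<kappa> l - \<kappa> j) > 0"
proof -
  have bk: "\<kappa> x = \<kappa> (x - int N)" for x using per[of "x - int N"] by simp
  have mono: "\<kappa> x < \<kappa> y" if "1 \<le> x" "x < y" "y \<le> int N" for x y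
    using strict_mono_onD[OF sm, of x y] that by simp
  consider "j \<le> int N" "l \<le> int N" | "j \<le> int N" "int N < l" | "int N < j"
    by linarith
  then show ?thesis
  proof cases
    case 1
    then show ?thesis using mono[of i j] mono[of i l] mono[of j l] assms by simp
  next
    case 2
    have a: "\<kappa> i < \<kappa> j" using mono[of i j] 2 assms by simp
    have b: "\<kappa> l < \<kappa> i" using mono[of "l - int N" i] 2 assms bk[of l] by simp
    have "(\<kappa> j - \<kappa> i) * ((\<kappa> l - \<kappa> i) * (\<kappa> l - \<kappa> j)) > 0"
      using a b by (intro mult_pos_pos mult_neg_neg) auto
    then show ?thesis by (simp add: mult.assoc)
  next
    case 3
    have a: "\<kappa> j < \<kappa> l" using mono[of "j - int N" "l - int N"] 3 assms bk[of l] bk[of j] by simp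
    have b: "\<kappa> l < \<kappa> i" using mono[of "l - int N" i] 3 assms bk[of l] by simp
    have "((\<kappa> j - \<kappa> i) * (\<kappa> l - \<kappa> i)) * (\<kappa> l - \<kappa> j) > 0"
      using a b by (intro mult_pos_pos mult_neg_neg) auto
    then show ?thesis by (simp add: mult.assoc)
  qed
qed

lemma kappa_pos:
  fixes \<kappa> :: "int \<Rightarrow> real"
  assumes per: "\<And>l. \<kappa> (l + int N) = \<kappa> l" and sm: "strict_mono_on {1..int N} \<kappa>"
    and "i < j" "j < l" "l < i + int N"
  shows "orient (Qpt \<kappa> i) (Qpt \<kappa> j) (Qpt \<kappa> l) > 0"
proof -
  have Np: "int N > 0" using assms by simp
  define s where "s = ((i - 1) div int N) * int N"
  have sh: "\<kappa> x = \<kappa> (x - s)" for x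
    using periodic_int[of \<kappa> "int N" "x - s" "(i - 1) div int N", OF per] by (simp add: s_def)
  have i0: "i - s = (i - 1) mod int N + 1"
    unfolding s_def using minus_div_mult_eq_mod[of "i - 1" "int N"] by linarith
  have rr: "0 \<le> (i - 1) mod int N" "(i - 1) mod int N < int N" using Np by simp_all
  have "(\<kappa> (j - s) - \<kappa> (i - s)) * (\<kappa> (l - s) - \<kappa> (i - s)) * (\<kappa> (l - s) - \<kappa> (j - s)) > 0"
    by (rule kappa_pos0[OF per sm]) (insert i0 rr assms, linarith)+
  then show ?thesis using sh[of i] sh[of j] sh[of l] by (simp add: orient_Qpt)
qed

lemma kappa_nonneg:
  fixes \<kappa> :: "int \<Rightarrow> real"
  assumes per: "\<And>l. \<kappa> (l + int N) = \<kappa> l" and sm: "strict_mono_on {1..int N} \<kappa>"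
    and "i \<le> j" "j \<le> l" "l \<le> i + int N"
  shows "orient (Qpt \<kappa> i) (Qpt \<kappa> j) (Qpt \<kappa> l) \<ge> 0"
proof (cases "i = j \<or> j = l \<or> l = i + int N")
  case True
  then show ?thesis
  proof (elim disjE)
    assume "l = i + int N"
    then have "Qpt \<kappa> l = Qpt \<kappa> i" using per[of i] by (simp add: Qpt_def)
    then show ?thesis by (simp add: orient_same)
  qed (auto simp: orient_same)
next
  case False
  then show ?thesis using kappa_pos[OF per sm, of i j l] assms by fastforce
qed


lemma prod01:
  fixes f :: "'a \<Rightarrow> real"
  assumes "finite K" "\<And>k. k \<in> K \<Longrightarrow> f k = 0 \<or> f k = 1"
  shows "(\<Prod>k\<in>K. f k) = 1 \<longleftrightarrow> (\<forall>k\<in>K. f k = 1)"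
  using assms
proof (induction K rule: finite_induct)
  case empty then show ?case by simp
next
  case (insert x F)
  have fx: "f x = 0 \<or> f x = 1" using insert.prems by simp
  have eq: "(\<Prod>k\<in>insert x F. f k) = f x * (\<Prod>k\<in>F. f k)" using insert.hyps by simp
  show ?case
  proof (cases "f x = 0")
    case True
    then show ?thesis using eq by auto
  next
    case False
    then have "f x = 1" using fx by simp
    then show ?thesis using eq insert.IH insert.prems by auto
  qed
qed

lemma heaviside01: "heaviside x = 0 \<or> heaviside x = 1"
  by (simp add: heaviside_def)

lemma region_char:
  "region \<kappa> Na Nb m = {q. \<forall>k\<in>{m + int Na .. m + int Nb}.
      0 \<le> orient (Qpt \<kappa> (k - int Na)) (Qpt \<kappa> k) q \<and> 0 \<le> orient (Qpt \<kappa> k) (Qpt \<kappa> (k + int Na)) q}"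
proof -
  have r: "rho \<kappa> Na q k = 1 \<longleftrightarrow> 0 \<le> orient (Qpt \<kappa> (k - int Na)) (Qpt \<kappa> k) q \<and> 0 \<le> orient (Qpt \<kappa> k) (Qpt \<kappa> (k + int Na)) q" for q k
    by (simp add: rho_def heaviside_def qtilde_orient)
  have r01: "rho \<kappa> Na q k = 0 \<or> rho \<kappa> Na q k = 1" for q k
    by (simp add: rho_def heaviside_def)
  show ?thesis unfolding region_def Pm_def
    using prod01[of "{m + int Na .. m + int Nb}" "rho \<kappa> Na _"] r01 r by auto
qed

lemma orient_halfspace:
  "{q. 0 \<le> orient A B q} = {x. (snd B - snd A, fst A - fst B) \<bullet> x \<le> (snd B - snd A) * fst A - (fst B - fst A) * snd A}"
  by (auto simp: orient_def inner_prod_def algebra_simps)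

lemma convex_orient: "convex {q. 0 \<le> orient A B q}"
  unfolding orient_halfspace by (rule convex_halfspace_le)

lemma polyhedron_orient: "polyhedron {q. 0 \<le> orient A B q}"
  unfolding orient_halfspace by (rule polyhedron_halfspace_le)

lemma convex_parab: "convex {q :: real \<times> real. (fst q)^2 \<le> snd q}"
proof (rule convexI)
  fix x y :: "real \<times> real" and u v :: real
  assume x: "x \<in> {q. (fst q)^2 \<le> snd q}" and y: "y \<in> {q. (fst q)^2 \<le> snd q}"
    and u: "0 \<le> u" and v: "0 \<le> v" and uv: "u + v = 1"
  have e: "u * (fst x)^2 + v * (fst y)^2 - (u * fst x + v * fst y)^2 = u * v * (fst x - fst y)^2"
  proof -
    have vv: "v = 1 - u" using uv by simp
    show ?thesis unfolding vv by (simp add: power2_eq_square algebra_simps)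
  qed
  have "0 \<le> u * v * (fst x - fst y)^2" using u v by simp
  then have "(u * fst x + v * fst y)^2 \<le> u * (fst x)^2 + v * (fst y)^2" using e by linarith
  also have "\<dots> \<le> u * snd x + v * snd y"
    using x y u v by (intro add_mono mult_left_mono) auto
  finally show "u *\<^sub>R x + v *\<^sub>R y \<in> {q. (fst q)^2 \<le> snd q}" by simp
qed


lemma parab_extreme:
  fixes a b :: "real \<times> real"
  assumes pa: "(fst a)^2 \<le> snd a" and pb: "(fst b)^2 \<le> snd b" and u: "0 < u" "u < 1"
    and eq: "(t, t^2) = (1 - u) *\<^sub>R a + u *\<^sub>R b"
  shows "a = b"
proof -
  obtain a1 a2 b1 b2 where ab: "a = (a1, a2)" "b = (b1, b2)" by (cases a, cases b) auto
  have t1: "t = (1 - u) * a1 + u * b1" using arg_cong[OF eq, of fst] ab by simp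
  have t2: "t^2 = (1 - u) * a2 + u * b2" using arg_cong[OF eq, of snd] ab by simp
  have e: "(1 - u) * a1^2 + u * b1^2 - t^2 = u * (1 - u) * (a1 - b1)^2"
    unfolding t1 by (simp add: power2_eq_square algebra_simps)
  have le: "(1 - u) * a1^2 + u * b1^2 \<le> (1 - u) * a2 + u * b2"
    using pa pb ab u by (intro add_mono mult_left_mono) auto
  have "u * (1 - u) * (a1 - b1)^2 \<le> 0" using e le t2 by linarith
  moreover have "u * (1 - u) > 0" using u by simp
  ultimately have "(a1 - b1)^2 \<le> 0"
    by (metis mult_le_0_iff not_le)
  then have a1b1: "a1 = b1" by simp
  then have ta: "t = a1" using t1 by (simp add: algebra_simps)
  have z: "(1 - u) * (a2 - a1^2) + u * (b2 - a1^2) = 0" using t2 ta by (simp add: algebra_simps)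
  have n1: "(1 - u) * (a2 - a1^2) \<ge> 0" using pa ab u by simp
  have n2: "u * (b2 - a1^2) \<ge> 0" using pb ab u a1b1 by simp
  have "(1 - u) * (a2 - a1^2) = 0" "u * (b2 - a1^2) = 0" using z n1 n2 by linarith+
  then have "a2 = a1^2" "b2 = a1^2" using u by simp_all
  then show ?thesis using ab a1b1 by simp
qed


theorem lemma5p1:
  fixes \<kappa> :: "int \<Rightarrow> real" and Na Nb :: nat and m :: int
  assumes "1 \<le> Na" and "Na < Nb"
    and "\<And>l. \<kappa> (l + int (Na + Nb)) = \<kappa> l"
    and "strict_mono_on {1 .. int (Na + Nb)} \<kappa>"
  shows "polytope (region \<kappa> Na Nb m)
    \<and> Qpt \<kappa> m extreme_point_of (region \<kappa> Na Nb m)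
    \<and> (\<forall>q \<in> region \<kappa> Na Nb m. snd q \<ge> (fst q)^2)
    \<and> region \<kappa> Na Nb m \<subseteq> convex hull (Qpt \<kappa> ` {m .. m + int Nb})
    \<and> (Na = 1 \<longrightarrow> region \<kappa> Na Nb m = convex hull (Qpt \<kappa> ` {m .. m + int Nb}))
    \<and> (\<forall>q \<in> region \<kappa> Na Nb m.
          Min (\<kappa> ` {m .. m + int Nb}) \<le> fst q \<and> fst q \<le> Max (\<kappa> ` {m .. m + int Nb}))"
proof -
  define N where "N = Na + Nb"
  define P where "P = Qpt \<kappa>"
  have per: "\<And>l. \<kappa> (l + int N) = \<kappa> l" using assms(3) N_def by simp
  have sm: "strict_mono_on {1..int N} \<kappa>" using assms(4) by (simp add: N_def)
  have pos: "\<And>i j l. i < j \<Longrightarrow> j < l \<Longrightarrow> l < i + int N \<Longrightarrow> orient (P i) (P j) (P l) > 0"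
    using kappa_pos[OF per sm] P_def by simp
  have nn: "\<And>i j l. i \<le> j \<Longrightarrow> j \<le> l \<Longrightarrow> l \<le> i + int N \<Longrightarrow> orient (P i) (P j) (P l) \<ge> 0"
    using kappa_nonneg[OF per sm] P_def by simp
  have Pper: "P (l + int N) = P l" for l by (simp add: P_def Qpt_def per)
  define K where "K = {m + int Na .. m + int Nb}"
  define S where "S = (\<lambda>k. {q. 0 \<le> orient (P (k - int Na)) (P k) q} \<inter> {q. 0 \<le> orient (P k) (P (k + int Na)) q})"
  let ?R = "region \<kappa> Na Nb m"
  let ?V = "P ` {m .. m + int Nb}"
  let ?H = "convex hull ?V"
  have Rc: "?R = {q. \<forall>k\<in>K. 0 \<le> orient (P (k - int Na)) (P k) q \<and> 0 \<le> orient (P k) (P (k + int Na)) q}"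
    using region_char[of \<kappa> Na Nb m] by (simp add: P_def K_def)
  have RS: "?R = \<Inter> (S ` K)" unfolding Rc S_def by auto
  have convR: "convex ?R" unfolding RS S_def
    by (intro convex_INT convex_Int convex_orient)
  have polyR: "polyhedron ?R" unfolding RS S_def
    by (intro polyhedron_Inter) (auto simp: K_def intro!: polyhedron_Int polyhedron_orient)
  have img: "(\<lambda>i. P (m + int i)) ` {0..Nb} = ?V"
  proof
    show "(\<lambda>i. P (m + int i)) ` {0..Nb} \<subseteq> ?V" by auto
    show "?V \<subseteq> (\<lambda>i. P (m + int i)) ` {0..Nb}"
    proof
      fix x assume "x \<in> ?V"
      then obtain j where j: "j \<in> {m .. m + int Nb}" "x = P j" by auto
      then have "x = P (m + int (nat (j - m)))" "nat (j - m) \<in> {0..Nb}" by auto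
      then show "x \<in> (\<lambda>i. P (m + int i)) ` {0..Nb}" by blast
    qed
  qed
  have sub: "?R \<subseteq> ?H"
  proof
    fix q assume q: "q \<in> ?R"
    have "q \<in> convex hull ((\<lambda>i. P (m + int i)) ` {0..Nb})"
    proof (rule polygon_hull[where a = Na])
      show "orient (P (m + int i)) (P (m + int j)) (P (m + int k)) > 0" if "i < j" "j < k" "k \<le> Nb" for i j k
      proof -
        have "m + int k < m + int i + int N" using that assms(1) by (simp add: N_def)
        then show ?thesis using pos[of "m + int i" "m + int j" "m + int k"] that by simp
      qed
      show "1 \<le> Na" "Na < Nb" using assms by auto
      show "orient (P (m + int b)) (P (m + int (b + Na))) q \<ge> 0" if "b + Na \<le> Nb" for b
      proof -
        have "m + int (b + Na) \<in> K" using that by (simp add: K_def)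
        then have "0 \<le> orient (P (m + int (b + Na) - int Na)) (P (m + int (b + Na))) q"
          using q Rc by blast
        then show ?thesis by simp
      qed
      show "orient (P (m + int Nb)) (P (m + int 0)) q \<ge> 0"
      proof -
        have "m + int Nb \<in> K" using assms by (simp add: K_def)
        then have "0 \<le> orient (P (m + int Nb)) (P (m + int Nb + int Na)) q"
          using q Rc by blast
        moreover have "P (m + int Nb + int Na) = P m" using Pper[of m] by (simp add: N_def add.commute add.left_commute)
        ultimately show ?thesis by simp
      qed
    qed
    then show "q \<in> ?H" using img by simp
  qed
  have Hpar: "?H \<subseteq> {q. (fst q)^2 \<le> snd q}"
    by (rule hull_minimal) (auto simp: P_def Qpt_def convex_parab)
  have par: "\<forall>q \<in> ?R. snd q \<ge> (fst q)^2" using sub Hpar by blast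
  let ?mn = "Min (\<kappa> ` {m .. m + int Nb})" and ?mx = "Max (\<kappa> ` {m .. m + int Nb})"
  have Hstrip: "?H \<subseteq> {?mn .. ?mx} \<times> UNIV"
    by (rule hull_minimal) (auto simp: P_def Qpt_def intro: convex_Times)
  have strip: "\<forall>q \<in> ?R. ?mn \<le> fst q \<and> fst q \<le> ?mx" using sub Hstrip by fastforce
  have bnd: "bounded ?R"
    by (rule bounded_subset[OF compact_imp_bounded[OF finite_imp_compact_convex_hull] sub]) simp
  have ptope: "polytope ?R" using polyR bnd by (simp add: polytope_eq_bounded_polyhedron)
  have QmR: "P m \<in> ?R"
    unfolding Rc
  proof (intro CollectI ballI conjI)
    fix k assume k: "k \<in> K"
    have "0 \<le> orient (P m) (P (k - int Na)) (P k)"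
      using k by (intro nn) (auto simp: K_def N_def)
    then show "0 \<le> orient (P (k - int Na)) (P k) (P m)"
      by (metis orient_cyc)
    have "0 \<le> orient (P k) (P (k + int Na)) (P (m + int N))"
      using k by (intro nn) (auto simp: K_def N_def)
    then show "0 \<le> orient (P k) (P (k + int Na)) (P m)" using Pper by simp
  qed
  have ext: "P m extreme_point_of ?R"
    unfolding extreme_point_of_def
  proof (intro conjI ballI QmR)
    fix a b assume a: "a \<in> ?R" and b: "b \<in> ?R"
    show "P m \<notin> open_segment a b"
    proof
      assume "P m \<in> open_segment a b"
      then obtain u where ab: "a \<noteq> b" "0 < u" "u < 1" "P m = (1 - u) *\<^sub>R a + u *\<^sub>R b"
        by (auto simp: in_segment)
      have "(\<kappa> m, (\<kappa> m)^2) = (1 - u) *\<^sub>R a + u *\<^sub>R b" using ab(4) by (simp add: P_def Qpt_def)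
      then have "a = b" using parab_extreme par a b ab by blast
      then show False using ab by simp
    qed
  qed
  have eq1: "?R = ?H" if N1: "Na = 1"
  proof
    show "?R \<subseteq> ?H" by (rule sub)
    show "?H \<subseteq> ?R"
    proof (rule hull_minimal)
      show "convex ?R" by (rule convR)
      show "?V \<subseteq> ?R"
      proof
        fix x assume "x \<in> ?V"
        then obtain j where j: "m \<le> j" "j \<le> m + int Nb" "x = P j" by auto
        show "x \<in> ?R" unfolding Rc
        proof (intro CollectI ballI conjI)
          fix k assume k: "k \<in> K"
          show "0 \<le> orient (P (k - int Na)) (P k) x"
          proof (cases "k \<le> j")
            case True then show ?thesis using j k N1 unfolding j(3) by (intro nn) (auto simp: K_def N_def)
          next
            case False
            then have "0 \<le> orient (P j) (P (k - int Na)) (P k)"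
              using j k N1 by (intro nn) (auto simp: K_def N_def)
            then show ?thesis using j by (metis orient_cyc)
          qed
          show "0 \<le> orient (P k) (P (k + int Na)) x"
          proof (cases "k + 1 \<le> j")
            case True then show ?thesis using j k N1 unfolding j(3) by (intro nn) (auto simp: K_def N_def)
          next
            case False
            then have "0 \<le> orient (P j) (P k) (P (k + int Na))"
              using j k N1 by (intro nn) (auto simp: K_def N_def)
            then show ?thesis using j by (metis orient_cyc)
          qed
        qed
      qed
    qed
  qed
  show ?thesis using ptope ext par sub eq1 strip by (simp add: P_def)
qed

end
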